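(* Assume that $(R,\mathfrak m)$ is $F$-pure and let $\mathfrak a$ be an ideal of $R$. Then $(0:_E\mathfrak a)\subseteq(\operatorname{ann}_{\Phi(E)}(\mathfrak aR[x,f]))_0$ if and only if $\mathfrak a$ is $\Phi(E)$-special and $(\operatorname{ann}_{\Phi(E)}(\mathfrak aR[x,f]))_0=(0:_E\mathfrak a)$.
   Context: $(R,\mathfrak m)$ is a commutative Noetherian local ring of prime characteristic $p$. $R$ is $F$-pure if for every $R$-module $M$ the map $M\to R^{(1)}\otimes_RM$, $m\mapsto1\otimes m$, is injective ($R^{(1)}$ = $R$ with right structure via $r\mapsto r^p$). The Frobenius skew polynomial ring $R[x,f]$ consists of polynomials $\sum r_ix^i$, free left $R$-module on $(x^i)_{i\ge0}$, with $xr=r^px$; graded with $n$th component $Rx^n$. $E=E_R(R/\mathfrak m)$; $\Phi(E)=R[x,f]\otimes_RE=\bigoplus_nRx^n\otimes_RE$, with $0$th component $R\otimes_RE$ identified with $E$. An ideal is $\Phi(E)$-special if it equals $(0:_RN)$ for some $R[x,f]$-submodule $N$ of $\Phi(E)$. $\operatorname{ann}_{\Phi(E)}(\mathfrak aR[x,f])$ is the $R[x,f]$-submodule of $\Phi(E)$ consisting of elements annihilated by all $rx^n$ with $r\in\mathfrak a$, $n\ge0$, and $(\cdot)_0$ denotes its $0$th component, a submodule of $E$. *)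

theory Defs
  imports Main "HOL-Computational_Algebra.Primes"
begin

definition is_ideal :: "'a::comm_ring_1 set \<Rightarrow> bool" where
  "is_ideal I \<longleftrightarrow> 0 \<in> I \<and> (\<forall>x\<in>I. \<forall>y\<in>I. x + y \<in> I) \<and> (\<forall>r. \<forall>x\<in>I. r * x \<in> I)"

definition noetherian_ring :: "'a::comm_ring_1 itself \<Rightarrow> bool" where
  "noetherian_ring _ \<longleftrightarrow>
     (\<forall>I :: nat \<Rightarrow> 'a set. (\<forall>n. is_ideal (I n)) \<and> (\<forall>n. I n \<subseteq> I (Suc n))
        \<longrightarrow> (\<exists>N. \<forall>n\<ge>N. I n = I N))"

definition local_ring_max :: "'a::comm_ring_1 set \<Rightarrow> bool" where
  "local_ring_max m \<longleftrightarrow> is_ideal m \<and> 1 \<notin> m \<and> (\<forall>x. x \<notin> m \<longrightarrow> (\<exists>y. x * y = 1))"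

definition is_rmodule :: "'c set \<Rightarrow> ('c \<Rightarrow> 'c \<Rightarrow> 'c) \<Rightarrow> 'c \<Rightarrow> ('a::comm_ring_1 \<Rightarrow> 'c \<Rightarrow> 'c) \<Rightarrow> bool" where
  "is_rmodule M add zero smul \<longleftrightarrow>
     zero \<in> M \<and> (\<forall>x\<in>M. \<forall>y\<in>M. add x y \<in> M) \<and> (\<forall>r. \<forall>x\<in>M. smul r x \<in> M) \<and>
     (\<forall>x\<in>M. \<forall>y\<in>M. \<forall>z\<in>M. add (add x y) z = add x (add y z)) \<and>
     (\<forall>x\<in>M. \<forall>y\<in>M. add x y = add y x) \<and>
     (\<forall>x\<in>M. add zero x = x) \<and>
     (\<forall>x\<in>M. \<exists>y\<in>M. add x y = zero) \<and>
     (\<forall>r. \<forall>x\<in>M. \<forall>y\<in>M. smul r (add x y) = add (smul r x) (smul r y)) \<and>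
     (\<forall>r s. \<forall>x\<in>M. smul (r + s) x = add (smul r x) (smul s x)) \<and>
     (\<forall>r s. \<forall>x\<in>M. smul (r * s) x = smul r (smul s x)) \<and>
     (\<forall>x\<in>M. smul 1 x = x)"

definition is_submodule :: "'c set \<Rightarrow> 'c set \<Rightarrow> ('c \<Rightarrow> 'c \<Rightarrow> 'c) \<Rightarrow> 'c \<Rightarrow> ('a::comm_ring_1 \<Rightarrow> 'c \<Rightarrow> 'c) \<Rightarrow> bool" where
  "is_submodule N M add zero smul \<longleftrightarrow>
     N \<subseteq> M \<and> zero \<in> N \<and> (\<forall>x\<in>N. \<forall>y\<in>N. add x y \<in> N) \<and> (\<forall>r. \<forall>x\<in>N. smul r x \<in> N)"

text \<open>Injectivity of a module, via Baer's criterion.\<close>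
definition injective_module :: "'c set \<Rightarrow> ('c \<Rightarrow> 'c \<Rightarrow> 'c) \<Rightarrow> 'c \<Rightarrow> ('a::comm_ring_1 \<Rightarrow> 'c \<Rightarrow> 'c) \<Rightarrow> bool" where
  "injective_module M add zero smul \<longleftrightarrow>
     (\<forall>I g. is_ideal I \<and> (\<forall>x\<in>I. g x \<in> M) \<and> (\<forall>x\<in>I. \<forall>y\<in>I. g (x + y) = add (g x) (g y))
        \<and> (\<forall>r. \<forall>x\<in>I. g (r * x) = smul r (g x))
        \<longrightarrow> (\<exists>e\<in>M. \<forall>x\<in>I. g x = smul x e))"

text \<open>M is an injective hull of R/m: M is injective and is an essential extension of
  a submodule R u \<cong> R/m (i.e. ann u = m).\<close>
definition injective_hull_residue ::
  "'a::comm_ring_1 set \<Rightarrow> 'c set \<Rightarrow> ('c \<Rightarrow> 'c \<Rightarrow> 'c) \<Rightarrow> 'c \<Rightarrow> ('a \<Rightarrow> 'c \<Rightarrow> 'c) \<Rightarrow> bool" where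
  "injective_hull_residue m M add zero smul \<longleftrightarrow>
     injective_module M add zero smul \<and>
     (\<exists>u\<in>M. {r. smul r u = zero} = m \<and>
        (\<forall>N. is_submodule N M add zero smul \<and> N \<noteq> {zero}
             \<longrightarrow> N \<inter> range (\<lambda>r. smul r u) \<noteq> {zero}))"

definition delta :: "'x \<Rightarrow> 'x \<Rightarrow> int" where
  "delta x = (\<lambda>y. if y = x then 1 else 0)"

inductive_set zspan :: "('x \<Rightarrow> int) set \<Rightarrow> ('x \<Rightarrow> int) set" for G where
  zspan_zero: "(\<lambda>_. 0) \<in> zspan G"
| zspan_gen: "g \<in> G \<Longrightarrow> g \<in> zspan G"
| zspan_add: "f \<in> zspan G \<Longrightarrow> h \<in> zspan G \<Longrightarrow> (\<lambda>x. f x + h x) \<in> zspan G"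
| zspan_neg: "f \<in> zspan G \<Longrightarrow> (\<lambda>x. - f x) \<in> zspan G"

text \<open>Finitely supported integer combinations of the symbols (n, r, e) with e \<in> M;
  the symbol (n, r, e) represents r x^n \<otimes> e in \<Phi>(M) = R[x,f] \<otimes>_R M.\<close>
definition free_Phi :: "'c set \<Rightarrow> (nat \<times> 'a \<times> 'c \<Rightarrow> int) set" where
  "free_Phi M = {f. finite {z. f z \<noteq> 0} \<and> (\<forall>n r e. f (n, r, e) \<noteq> 0 \<longrightarrow> e \<in> M)}"

text \<open>Defining relations of the tensor products R x^n \<otimes>_R M, where R x^n is an
  R-bimodule with (r x^n) s = r s^(p^n) x^n.\<close>
definition Phi_rels :: "nat \<Rightarrow> 'c set \<Rightarrow> ('c \<Rightarrow> 'c \<Rightarrow> 'c) \<Rightarrow> ('a::comm_ring_1 \<Rightarrow> 'c \<Rightarrow> 'c)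
    \<Rightarrow> (nat \<times> 'a \<times> 'c \<Rightarrow> int) set" where
  "Phi_rels p M add smul =
     {(\<lambda>z. delta (n, r + r', e) z - delta (n, r, e) z - delta (n, r', e) z) | n r r' e. e \<in> M}
   \<union> {(\<lambda>z. delta (n, r, add e e') z - delta (n, r, e) z - delta (n, r, e') z) | n r e e'. e \<in> M \<and> e' \<in> M}
   \<union> {(\<lambda>z. delta (n, r * s ^ (p ^ n), e) z - delta (n, r, smul s e) z) | n r s e. e \<in> M}"

text \<open>Kernel of the presentation: a representative is zero in \<Phi>(M) iff it lies here.\<close>
definition Phi_zero :: "nat \<Rightarrow> 'c set \<Rightarrow> ('c \<Rightarrow> 'c \<Rightarrow> 'c) \<Rightarrow> ('a::comm_ring_1 \<Rightarrow> 'c \<Rightarrow> 'c)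
    \<Rightarrow> (nat \<times> 'a \<times> 'c \<Rightarrow> int) set" where
  "Phi_zero p M add smul = zspan (Phi_rels p M add smul)"

definition lin_map :: "('x \<Rightarrow> 'y) \<Rightarrow> ('x \<Rightarrow> int) \<Rightarrow> 'y \<Rightarrow> int" where
  "lin_map g f = (\<lambda>y. \<Sum>z\<in>{z. f z \<noteq> 0 \<and> g z = y}. f z)"

definition Phi_smul :: "'a::comm_ring_1 \<Rightarrow> (nat \<times> 'a \<times> 'c \<Rightarrow> int) \<Rightarrow> (nat \<times> 'a \<times> 'c \<Rightarrow> int)" where
  "Phi_smul s = lin_map (\<lambda>(n, r, e). (n, s * r, e))"

definition Phi_xact :: "nat \<Rightarrow> (nat \<times> 'a::comm_ring_1 \<times> 'c \<Rightarrow> int) \<Rightarrow> (nat \<times> 'a \<times> 'c \<Rightarrow> int)" where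
  "Phi_xact p = lin_map (\<lambda>(n, r, e). (Suc n, r ^ p, e))"

text \<open>Preimages of R[x,f]-submodules of \<Phi>(M) in the free group (they contain the kernel).\<close>
definition Phi_submodule_rep :: "nat \<Rightarrow> 'c set \<Rightarrow> ('c \<Rightarrow> 'c \<Rightarrow> 'c) \<Rightarrow> ('a::comm_ring_1 \<Rightarrow> 'c \<Rightarrow> 'c)
    \<Rightarrow> (nat \<times> 'a \<times> 'c \<Rightarrow> int) set \<Rightarrow> bool" where
  "Phi_submodule_rep p M add smul N \<longleftrightarrow>
     N \<subseteq> free_Phi M \<and> Phi_zero p M add smul \<subseteq> N \<and>
     (\<forall>f\<in>N. \<forall>h\<in>N. (\<lambda>z. f z + h z) \<in> N) \<and> (\<forall>f\<in>N. (\<lambda>z. - f z) \<in> N) \<and>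
     (\<forall>s. \<forall>f\<in>N. Phi_smul s f \<in> N) \<and> (\<forall>f\<in>N. Phi_xact p f \<in> N)"

text \<open>a is \<Phi>(E)-special: a = (0 :_R N) for some R[x,f]-submodule N of \<Phi>(E).\<close>
definition Phi_special :: "nat \<Rightarrow> 'c set \<Rightarrow> ('c \<Rightarrow> 'c \<Rightarrow> 'c) \<Rightarrow> ('a::comm_ring_1 \<Rightarrow> 'c \<Rightarrow> 'c)
    \<Rightarrow> 'a set \<Rightarrow> bool" where
  "Phi_special p M add smul \<aa> \<longleftrightarrow>
     (\<exists>N. Phi_submodule_rep p M add smul N \<and>
          \<aa> = {s. \<forall>f\<in>N. Phi_smul s f \<in> Phi_zero p M add smul})"

text \<open>(ann_{\<Phi>(E)}(a R[x,f]))_0, viewed inside E via e \<mapsto> 1 \<otimes> e: those e with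
  r x^n \<otimes> e = 0 in R x^n \<otimes> E for all r \<in> a and n \<ge> 0.\<close>
definition Phi_ann0 :: "nat \<Rightarrow> 'c set \<Rightarrow> ('c \<Rightarrow> 'c \<Rightarrow> 'c) \<Rightarrow> ('a::comm_ring_1 \<Rightarrow> 'c \<Rightarrow> 'c)
    \<Rightarrow> 'a set \<Rightarrow> 'c set" where
  "Phi_ann0 p M add smul \<aa> =
     {e \<in> M. \<forall>n. \<forall>r\<in>\<aa>. delta (n, r, e) \<in> Phi_zero p M add smul}"

definition colon_mod :: "'c set \<Rightarrow> 'c \<Rightarrow> ('a::comm_ring_1 \<Rightarrow> 'c \<Rightarrow> 'c) \<Rightarrow> 'a set \<Rightarrow> 'c set" where
  "colon_mod M zero smul \<aa> = {e \<in> M. \<forall>r\<in>\<aa>. smul r e = zero}"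

text \<open>For every R-module M (carried by a subset of the type 'c), the map
  M \<rightarrow> R^(1) \<otimes>_R M, e \<mapsto> 1 \<otimes> e, is injective. R^(1) \<otimes>_R M is the degree-1
  part R x \<otimes>_R M of \<Phi>(M), and 1 \<otimes> e is represented by the symbol (1, 1, e).\<close>
definition F_pure :: "'a::comm_ring_1 itself \<Rightarrow> 'c itself \<Rightarrow> nat \<Rightarrow> bool" where
  "F_pure _ _ p \<longleftrightarrow>
     (\<forall>(M :: 'c set) add zero (smul :: 'a \<Rightarrow> 'c \<Rightarrow> 'c). is_rmodule M add zero smul \<longrightarrow>
        (\<forall>e\<in>M. delta (1, 1, e) \<in> Phi_zero p M add smul \<longrightarrow> e = zero))"

end

theory Submission
  imports Defs "HOL-Algebra.FiniteProduct"
begin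

locale rmod =
  fixes E :: "'b set" and add zero and smul :: "'a::comm_ring_1 \<Rightarrow> 'b \<Rightarrow> 'b"
  assumes M: "is_rmodule E add zero smul"
begin
lemma closed: "zero \<in> E" "x \<in> E \<Longrightarrow> y \<in> E \<Longrightarrow> add x y \<in> E" "x \<in> E \<Longrightarrow> smul r x \<in> E"
  using M unfolding is_rmodule_def by auto
lemma assoc: "x \<in> E \<Longrightarrow> y \<in> E \<Longrightarrow> z \<in> E \<Longrightarrow> add (add x y) z = add x (add y z)"
  using M unfolding is_rmodule_def by auto
lemma comm: "x \<in> E \<Longrightarrow> y \<in> E \<Longrightarrow> add x y = add y x"
  using M unfolding is_rmodule_def by auto
lemma lzero: "x \<in> E \<Longrightarrow> add zero x = x"
  using M unfolding is_rmodule_def by auto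
lemma rzero: "x \<in> E \<Longrightarrow> add x zero = x"
  using lzero comm closed by metis
lemma inv_ex: assumes "x \<in> E" shows "\<exists>y\<in>E. add x y = zero"
proof -
  have h: "\<forall>x\<in>E. \<exists>y\<in>E. add x y = zero" using M unfolding is_rmodule_def by (elim conjE) assumption
  show ?thesis using h assms by blast
qed
lemma sdistr: "x \<in> E \<Longrightarrow> y \<in> E \<Longrightarrow> smul r (add x y) = add (smul r x) (smul r y)"
  using M unfolding is_rmodule_def by auto
lemma rdistr: "x \<in> E \<Longrightarrow> smul (r + s) x = add (smul r x) (smul s x)"
  using M unfolding is_rmodule_def by auto
lemma smult: "x \<in> E \<Longrightarrow> smul (r * s) x = smul r (smul s x)"
  using M unfolding is_rmodule_def by auto
lemma sone: "x \<in> E \<Longrightarrow> smul 1 x = x"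
  using M unfolding is_rmodule_def by auto
lemma cancel: assumes "a \<in> E" "b \<in> E" "c \<in> E" "add a b = add a c" shows "b = c"
proof -
  obtain y where y: "y \<in> E" "add a y = zero" using inv_ex assms by blast
  have "b = add (add y a) b" using y assms comm lzero by metis
  also have "\<dots> = add (add y a) c" using assms y assoc by metis
  also have "\<dots> = c" using y assms comm lzero by metis
  finally show ?thesis .
qed
lemma szero: assumes "x \<in> E" shows "smul 0 x = zero"
proof -
  have "add (smul 0 x) (smul 0 x) = add (smul 0 x) zero"
    using rdistr[OF assms, of 0 0] rzero closed assms by simp
  thus ?thesis using cancel closed assms by blast
qed
end

lemma baer_sep:
  assumes M: "is_rmodule E add zero smul"
    and loc: "local_ring_max m"
    and H: "injective_hull_residue m E add zero smul"
    and a: "is_ideal \<aa>" and s: "s \<notin> \<aa>"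
  shows "\<exists>e\<in>E. (\<forall>r\<in>\<aa>. smul r e = zero) \<and> smul s e \<noteq> zero"
proof -
  interpret rmod E add zero smul using M by unfold_locales
  from H obtain u where u: "u \<in> E" "{r. smul r u = zero} = m"
    and inj: "injective_module E add zero smul"
    unfolding injective_hull_residue_def by blast
  have am: "\<And>x. x \<in> m \<longleftrightarrow> smul x u = zero" using u by auto
  have aneg: "\<And>x. x \<in> \<aa> \<Longrightarrow> - x \<in> \<aa>"
    using a unfolding is_ideal_def by (metis mult_minus1)
  have aadd: "\<And>x y. x \<in> \<aa> \<Longrightarrow> y \<in> \<aa> \<Longrightarrow> x + y \<in> \<aa>"
    and amul: "\<And>r x. x \<in> \<aa> \<Longrightarrow> r * x \<in> \<aa>" and a0: "0 \<in> \<aa>"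
    using a unfolding is_ideal_def by auto
  have mideal: "is_ideal m" "1 \<notin> m" "\<And>x. x \<notin> m \<Longrightarrow> \<exists>y. x * y = 1"
    using loc unfolding local_ring_max_def by auto
  define I where "I = {r * s + a0 | r a0. a0 \<in> \<aa>}"
  have wd: "smul r u = smul r' u" if "r * s + a0 = r' * s + a0'" "a0 \<in> \<aa>" "a0' \<in> \<aa>" for r r' a0 a0'
  proof -
    have "(r - r') * s = a0' - a0" using that by (simp add: algebra_simps)
    hence d: "(r - r') * s \<in> \<aa>" using that aadd aneg by (metis diff_conv_add_uminus)
    have "r - r' \<in> m"
    proof (rule ccontr)
      assume "r - r' \<notin> m"
      then obtain y where "(r - r') * y = 1" using mideal by blast
      hence "s = y * ((r - r') * s)" by (metis mult.assoc mult.commute mult_1)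
      thus False using amul[OF d, of y] s by simp
    qed
    hence z: "smul (r - r') u = zero" using am by blast
    have "smul r u = smul (r' + (r - r')) u" by simp
    also have "\<dots> = add (smul r' u) (smul (r - r') u)" by (rule rdistr[OF u(1)])
    also have "\<dots> = smul r' u" using z rzero closed u by simp
    finally show ?thesis .
  qed
  define g where "g x = smul (SOME r. \<exists>a0\<in>\<aa>. x = r * s + a0) u" for x
  have gI: "g (r * s + a0) = smul r u" if "a0 \<in> \<aa>" for r a0
  proof -
    have "\<exists>r'. \<exists>a0'\<in>\<aa>. r * s + a0 = r' * s + a0'" using that by blast
    from someI_ex[OF this] obtain a0' where "a0' \<in> \<aa>"
      "r * s + a0 = (SOME r'. \<exists>a0'\<in>\<aa>. r * s + a0 = r' * s + a0') * s + a0'" by blast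
    thus ?thesis unfolding g_def using wd that by metis
  qed
  have "\<exists>e\<in>E. \<forall>x\<in>I. g x = smul x e"
  proof -
    have "is_ideal I" unfolding is_ideal_def I_def
    proof (intro conjI ballI allI)
      have "0 = 0 * s + 0" by simp
      thus "0 \<in> {r * s + a0 |r a0. a0 \<in> \<aa>}" using a0 by blast
    next
      fix x y assume "x \<in> {r * s + a0 |r a0. a0 \<in> \<aa>}" "y \<in> {r * s + a0 |r a0. a0 \<in> \<aa>}"
      then obtain r a0 r' a0' where "x = r * s + a0" "a0 \<in> \<aa>" "y = r' * s + a0'" "a0' \<in> \<aa>" by blast
      hence "x + y = (r + r') * s + (a0 + a0')" by (simp add: algebra_simps)
      thus "x + y \<in> {r * s + a0 |r a0. a0 \<in> \<aa>}" using aadd \<open>a0 \<in> \<aa>\<close> \<open>a0' \<in> \<aa>\<close> by blast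
    next
      fix t x assume "x \<in> {r * s + a0 |r a0. a0 \<in> \<aa>}"
      then obtain r a0 where "x = r * s + a0" "a0 \<in> \<aa>" by blast
      hence "t * x = (t * r) * s + t * a0" by (simp add: algebra_simps)
      thus "t * x \<in> {r * s + a0 |r a0. a0 \<in> \<aa>}" using amul \<open>a0 \<in> \<aa>\<close> by blast
    qed
    moreover have "\<forall>x\<in>I. g x \<in> E" using gI closed u unfolding I_def by auto
    moreover have "\<forall>x\<in>I. \<forall>y\<in>I. g (x + y) = add (g x) (g y)"
    proof (intro ballI)
      fix x y assume "x \<in> I" "y \<in> I"
      then obtain r a0 r' a0' where xy: "x = r * s + a0" "a0 \<in> \<aa>" "y = r' * s + a0'" "a0' \<in> \<aa>"
        unfolding I_def by blast
      have "x + y = (r + r') * s + (a0 + a0')" using xy by (simp add: algebra_simps)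
      hence "g (x + y) = g ((r + r') * s + (a0 + a0'))" by (rule arg_cong)
      also have "\<dots> = smul (r + r') u" by (rule gI) (use aadd xy in blast)
      also have "\<dots> = add (smul r u) (smul r' u)" using rdistr u by simp
      finally show "g (x + y) = add (g x) (g y)" using gI xy by simp
    qed
    moreover have "\<forall>t. \<forall>x\<in>I. g (t * x) = smul t (g x)"
    proof (intro ballI allI)
      fix t x assume "x \<in> I"
      then obtain r a0 where xy: "x = r * s + a0" "a0 \<in> \<aa>" unfolding I_def by blast
      have "t * x = (t * r) * s + t * a0" using xy by (simp add: algebra_simps)
      hence "g (t * x) = g ((t * r) * s + t * a0)" by (rule arg_cong)
      also have "\<dots> = smul (t * r) u" by (rule gI) (use amul xy in blast)
      also have "\<dots> = smul t (smul r u)" using smult u by simp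
      finally show "g (t * x) = smul t (g x)" using gI xy by simp
    qed
    ultimately show ?thesis using inj unfolding injective_module_def by blast
  qed
  then obtain e where e: "e \<in> E" "\<forall>x\<in>I. g x = smul x e" by blast
  have "\<forall>r\<in>\<aa>. smul r e = zero"
  proof
    fix r assume r: "r \<in> \<aa>"
    have "r = 0 * s + r" by simp
    hence "r \<in> I" using r unfolding I_def by blast
    hence "smul r e = g (0 * s + r)" using e by simp
    also have "\<dots> = smul 0 u" using gI r by blast
    also have "\<dots> = zero" using szero u by blast
    finally show "smul r e = zero" .
  qed
  moreover have "smul s e \<noteq> zero"
  proof -
    have "s = 1 * s + 0" by simp
    hence "s \<in> I" using a0 unfolding I_def by blast
    hence "smul s e = g (1 * s + 0)" using e by simp
    also have "\<dots> = smul 1 u" using gI a0 by blast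
    finally show ?thesis using am mideal by auto
  qed
  ultimately show ?thesis using e by blast
qed

lemma frob:
  assumes "prime p" "of_nat p = (0::'a::comm_ring_1)"
  shows "((x::'a) + y) ^ p = x ^ p + y ^ p"
proof -
  have p0: "p > 0" using assms prime_gt_0_nat by blast
  have "(x + y) ^ p = (\<Sum>k\<le>p. of_nat (p choose k) * x ^ k * y ^ (p - k))"
    by (rule binomial_ring)
  also have "\<dots> = (\<Sum>k\<in>{0,p}. of_nat (p choose k) * x ^ k * y ^ (p - k))"
  proof (intro sum.mono_neutral_right ballI)
    fix k assume "k \<in> {..p} - {0, p}"
    hence k: "k > 0" "k < p" by auto
    have "p dvd (p choose k)"
      by (rule dvd_choose_prime) (use k assms in auto)
    then obtain c where "p choose k = p * c" by blast
    hence "of_nat (p choose k) = (of_nat p * of_nat c :: 'a)" by simp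
    thus "of_nat (p choose k) * x ^ k * y ^ (p - k) = 0" using assms by simp
  qed auto
  finally show ?thesis using p0 by (simp add: add_ac)
qed

definition supp :: "('x \<Rightarrow> int) \<Rightarrow> 'x set" where "supp f = {z. f z \<noteq> 0}"

lemma lm_cong:
  assumes "finite A" "supp f \<subseteq> A"
  shows "lin_map g f y = (\<Sum>z\<in>{z\<in>A. g z = y}. f z)"
  unfolding lin_map_def
  by (rule sum.mono_neutral_left) (use assms in \<open>auto simp: supp_def\<close>)

lemma lm_add:
  assumes "finite (supp f)" "finite (supp h)"
  shows "lin_map g (\<lambda>z. f z + h z) = (\<lambda>y. lin_map g f y + lin_map g h y)"
proof
  fix y
  let ?A = "supp f \<union> supp h"
  have fA: "finite ?A" using assms by simp
  have s: "supp (\<lambda>z. f z + h z) \<subseteq> ?A" by (auto simp: supp_def)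
  have "lin_map g (\<lambda>z. f z + h z) y = (\<Sum>z\<in>{z\<in>?A. g z = y}. f z + h z)"
    by (rule lm_cong[OF fA s])
  also have "\<dots> = (\<Sum>z\<in>{z\<in>?A. g z = y}. f z) + (\<Sum>z\<in>{z\<in>?A. g z = y}. h z)"
    by (rule sum.distrib)
  also have "\<dots> = lin_map g f y + lin_map g h y"
    using lm_cong[OF fA, of f g y] lm_cong[OF fA, of h g y] by (simp add: supp_def)
  finally show "lin_map g (\<lambda>z. f z + h z) y = lin_map g f y + lin_map g h y" .
qed

lemma lm_neg: "lin_map g (\<lambda>z. - f z) = (\<lambda>y. - lin_map g f y)"
proof
  fix y
  have "{z. - f z \<noteq> 0 \<and> g z = y} = {z. f z \<noteq> 0 \<and> g z = y}" by simp
  thus "lin_map g (\<lambda>z. - f z) y = - lin_map g f y"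
    unfolding lin_map_def using sum_negf[of f "{z. f z \<noteq> 0 \<and> g z = y}"] by simp
qed

lemma lm_zero: "lin_map g (\<lambda>z. 0) = (\<lambda>y. 0)"
  unfolding lin_map_def by simp

lemma lm_delta: "lin_map g (delta z) = delta (g z)"
proof
  fix y
  have "{z'. delta z z' \<noteq> 0 \<and> g z' = y} = (if g z = y then {z} else {})"
    by (auto simp: delta_def)
  hence "lin_map g (delta z) y = (\<Sum>z'\<in>(if g z = y then {z} else {}). delta z z')"
    unfolding lin_map_def by simp
  thus "lin_map g (delta z) y = delta (g z) y"
    by (cases "g z = y") (simp_all add: delta_def)
qed

lemma lm_supp: "supp (lin_map g f) \<subseteq> g ` supp f"
proof
  fix y assume "y \<in> supp (lin_map g f)"
  hence "(\<Sum>z\<in>{z. f z \<noteq> 0 \<and> g z = y}. f z) \<noteq> 0" unfolding supp_def lin_map_def by simp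
  hence "{z. f z \<noteq> 0 \<and> g z = y} \<noteq> {}" by (metis sum.empty)
  then obtain z where "f z \<noteq> 0" "g z = y" by blast
  thus "y \<in> g ` supp f" unfolding supp_def by blast
qed

lemma lm_fin: "finite (supp f) \<Longrightarrow> finite (supp (lin_map g f))"
  by (rule finite_subset[OF lm_supp]) simp

lemma lm_comp:
  assumes fin: "finite (supp f)"
  shows "lin_map g1 (lin_map g2 f) = lin_map (g1 \<circ> g2) f"
proof
  fix y
  let ?S = "supp f"
  let ?B = "g2 ` ?S"
  have fB: "finite ?B" using fin by simp
  have "lin_map g1 (lin_map g2 f) y = (\<Sum>w\<in>{w\<in>?B. g1 w = y}. lin_map g2 f w)"
    by (rule lm_cong[OF fB lm_supp])
  also have "\<dots> = (\<Sum>w\<in>{w\<in>?B. g1 w = y}. \<Sum>z\<in>{z\<in>?S. g2 z = w}. f z)"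
    by (rule sum.cong) (auto intro: lm_cong[OF fin])
  also have "\<dots> = (\<Sum>w\<in>{w\<in>?B. g1 w = y}. \<Sum>z\<in>{z\<in>{z\<in>?S. g1 (g2 z) = y}. g2 z = w}. f z)"
    by (intro sum.cong refl arg_cong[where f="sum f"]) auto
  also have "\<dots> = (\<Sum>z\<in>{z\<in>?S. g1 (g2 z) = y}. f z)"
    by (rule sum.group) (use fin fB in auto)
  also have "\<dots> = lin_map (g1 \<circ> g2) f y"
    using lm_cong[OF fin order_refl, of "g1 \<circ> g2" y] by simp
  finally show "lin_map g1 (lin_map g2 f) y = lin_map (g1 \<circ> g2) f y" .
qed

lemma lm_rel3:
  "lin_map g (\<lambda>z. delta a z - delta b z - delta c z) = (\<lambda>z. delta (g a) z - delta (g b) z - delta (g c) z)"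
proof -
  have fd: "finite (supp (delta x))" for x :: 'x
    by (rule finite_subset[of _ "{x}"]) (auto simp: supp_def delta_def)
  have e: "(\<lambda>z. delta a z - delta b z - delta c z) = (\<lambda>z. (\<lambda>z. delta a z + (\<lambda>z. - delta b z) z) z + (\<lambda>z. - delta c z) z)"
    by simp
  have f2: "finite (supp (\<lambda>z. delta a z + (\<lambda>z. - delta b z) z))"
    by (rule finite_subset[of _ "supp (delta a) \<union> supp (delta b)"]) (use fd in \<open>auto simp: supp_def\<close>)
  have f3: "finite (supp (\<lambda>z. - delta x z))" for x :: 'x using fd[of x] by (simp add: supp_def)
  show ?thesis unfolding e lm_add[OF f2 f3] lm_add[OF fd f3] lm_neg lm_delta by simp
qed

lemma lm_rel2:
  "lin_map g (\<lambda>z. delta a z - delta b z) = (\<lambda>z. delta (g a) z - delta (g b) z)"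
proof -
  have fd: "finite (supp (delta x))" for x :: 'x
    by (rule finite_subset[of _ "{x}"]) (auto simp: supp_def delta_def)
  have f3: "finite (supp (\<lambda>z. - delta x z))" for x :: 'x using fd[of x] by (simp add: supp_def)
  have e: "(\<lambda>z. delta a z - delta b z) = (\<lambda>z. delta a z + (\<lambda>z. - delta b z) z)" by simp
  show ?thesis unfolding e lm_add[OF fd f3] lm_neg lm_delta by simp
qed

lemma rel1I: "e \<in> M \<Longrightarrow> (\<lambda>z. delta (n, r + r', e) z - delta (n, r, e) z - delta (n, r', e) z) \<in> Phi_rels p M add smul"
  unfolding Phi_rels_def by (rule UnI1, rule UnI1) blast
lemma rel2I: "e \<in> M \<Longrightarrow> e' \<in> M \<Longrightarrow> (\<lambda>z. delta (n, r, add e e') z - delta (n, r, e) z - delta (n, r, e') z) \<in> Phi_rels p M add smul"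
  unfolding Phi_rels_def by (rule UnI1, rule UnI2) blast
lemma rel3I: "e \<in> M \<Longrightarrow> (\<lambda>z. delta (n, r * s ^ (p ^ n), e) z - delta (n, r, smul s e) z) \<in> Phi_rels p M add smul"
  unfolding Phi_rels_def by (rule UnI2) blast

lemma relsE:
  assumes "x \<in> Phi_rels p M add smul"
  obtains n r r' e where "e \<in> M" "x = (\<lambda>z. delta (n, r + r', e) z - delta (n, r, e) z - delta (n, r', e) z)"
  | n r e e' where "e \<in> M" "e' \<in> M" "x = (\<lambda>z. delta (n, r, add e e') z - delta (n, r, e) z - delta (n, r, e') z)"
  | n r s e where "e \<in> M" "x = (\<lambda>z. delta (n, r * s ^ (p ^ n), e) z - delta (n, r, smul s e) z)"
  using assms unfolding Phi_rels_def by blast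

lemma zspan_map:
  assumes "\<And>x. x \<in> G \<Longrightarrow> lin_map g x \<in> zspan H"
    and "\<And>x. x \<in> zspan G \<Longrightarrow> finite (supp x)"
    and "f \<in> zspan G"
  shows "lin_map g f \<in> zspan H"
  using assms(3)
proof (induction rule: zspan.induct)
  case zspan_zero then show ?case by (simp add: lm_zero zspan.zspan_zero)
next
  case (zspan_gen x) then show ?case using assms(1) by blast
next
  case (zspan_add f h)
  then show ?case using assms(2) by (simp add: lm_add zspan.zspan_add)
next
  case (zspan_neg f)
  then show ?case by (simp add: lm_neg zspan.zspan_neg)
qed

lemma free_fin: "f \<in> free_Phi M \<Longrightarrow> finite (supp f)"
  unfolding free_Phi_def supp_def by blast
lemma freeE: "f \<in> free_Phi M \<Longrightarrow> f z \<noteq> 0 \<Longrightarrow> snd (snd z) \<in> M"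
  unfolding free_Phi_def by (cases z) auto
lemma freeI: "finite (supp f) \<Longrightarrow> (\<And>z. f z \<noteq> 0 \<Longrightarrow> snd (snd z) \<in> M) \<Longrightarrow> f \<in> free_Phi M"
  unfolding free_Phi_def supp_def by force

lemma free_add: "f \<in> free_Phi M \<Longrightarrow> h \<in> free_Phi M \<Longrightarrow> (\<lambda>z. f z + h z) \<in> free_Phi M"
proof (rule freeI)
  assume a: "f \<in> free_Phi M" "h \<in> free_Phi M"
  have "supp (\<lambda>z. f z + h z) \<subseteq> supp f \<union> supp h" by (auto simp: supp_def)
  thus "finite (supp (\<lambda>z. f z + h z))" using free_fin a by (meson finite_UnI finite_subset)
  fix z assume "f z + h z \<noteq> 0"
  hence "f z \<noteq> 0 \<or> h z \<noteq> 0" by auto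
  thus "snd (snd z) \<in> M" using freeE a by blast
qed
lemma free_neg: "f \<in> free_Phi M \<Longrightarrow> (\<lambda>z. - f z) \<in> free_Phi M"
  unfolding free_Phi_def by simp
lemma free_zero: "(\<lambda>z. 0) \<in> free_Phi M"
  unfolding free_Phi_def by simp
lemma free_delta: "snd (snd a) \<in> M \<Longrightarrow> delta a \<in> free_Phi M"
  by (rule freeI) (auto simp: supp_def delta_def split: if_splits)

lemma free_diff: "f \<in> free_Phi M \<Longrightarrow> h \<in> free_Phi M \<Longrightarrow> (\<lambda>z. f z - h z) \<in> free_Phi M"
proof -
  assume "f \<in> free_Phi M" "h \<in> free_Phi M"
  hence "(\<lambda>z. f z + (\<lambda>z. - h z) z) \<in> free_Phi M" using free_add free_neg by blast
  thus ?thesis by simp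
qed

lemma free_lm:
  assumes "\<And>z. snd (snd (g z)) = snd (snd z)" "f \<in> free_Phi M"
  shows "lin_map g f \<in> free_Phi M"
proof (rule freeI)
  show "finite (supp (lin_map g f))" using lm_fin free_fin assms(2) by blast
  fix y assume "lin_map g f y \<noteq> 0"
  hence "y \<in> g ` supp f" using lm_supp[of g f] by (auto simp: supp_def)
  then obtain z where "f z \<noteq> 0" "y = g z" by (auto simp: supp_def)
  thus "snd (snd y) \<in> M" using assms freeE by metis
qed

context rmod begin

lemma rels_free: "x \<in> Phi_rels p E add smul \<Longrightarrow> x \<in> free_Phi E"
  by (erule relsE) (auto intro!: free_diff free_delta closed)

lemma zero_free: "f \<in> Phi_zero p E add smul \<Longrightarrow> f \<in> free_Phi E"
  unfolding Phi_zero_def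
  by (induction rule: zspan.induct) (auto intro: free_zero rels_free free_add free_neg)

lemma smul_rels: "x \<in> Phi_rels p E add smul \<Longrightarrow> Phi_smul t x \<in> Phi_zero p E add smul"
  unfolding Phi_zero_def Phi_smul_def
proof (erule relsE)
  fix n r r' e assume "e \<in> E" "x = (\<lambda>z. delta (n, r + r', e) z - delta (n, r, e) z - delta (n, r', e) z)"
  thus "lin_map (\<lambda>(n, r, e). (n, t * r, e)) x \<in> zspan (Phi_rels p E add smul)"
    using rel1I[of e E n "t * r" "t * r'" p add smul]
    by (simp add: lm_rel3 distrib_left zspan.zspan_gen)
next
  fix n r e e' assume "e \<in> E" "e' \<in> E" "x = (\<lambda>z. delta (n, r, add e e') z - delta (n, r, e) z - delta (n, r, e') z)"
  thus "lin_map (\<lambda>(n, r, e). (n, t * r, e)) x \<in> zspan (Phi_rels p E add smul)"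
    using rel2I[of e E e' n "t * r" add p smul]
    by (simp add: lm_rel3 zspan.zspan_gen)
next
  fix n r s e assume "e \<in> E" "x = (\<lambda>z. delta (n, r * s ^ (p ^ n), e) z - delta (n, r, smul s e) z)"
  thus "lin_map (\<lambda>(n, r, e). (n, t * r, e)) x \<in> zspan (Phi_rels p E add smul)"
    using rel3I[of e E n "t * r" s p smul add]
    by (simp add: lm_rel2 mult.assoc zspan.zspan_gen)
qed

lemma xact_rels:
  assumes "prime p" "of_nat p = (0::'a)"
  shows "x \<in> Phi_rels p E add smul \<Longrightarrow> Phi_xact p x \<in> Phi_zero p E add smul"
  unfolding Phi_zero_def Phi_xact_def
proof (erule relsE)
  fix n r r' e assume "e \<in> E" "x = (\<lambda>z. delta (n, r + r', e) z - delta (n, r, e) z - delta (n, r', e) z)"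
  thus "lin_map (\<lambda>(n, r, e). (Suc n, r ^ p, e)) x \<in> zspan (Phi_rels p E add smul)"
    using rel1I[of e E "Suc n" "r ^ p" "r' ^ p" p add smul] frob[OF assms, of r r']
    by (simp add: lm_rel3 zspan.zspan_gen)
next
  fix n r e e' assume "e \<in> E" "e' \<in> E" "x = (\<lambda>z. delta (n, r, add e e') z - delta (n, r, e) z - delta (n, r, e') z)"
  thus "lin_map (\<lambda>(n, r, e). (Suc n, r ^ p, e)) x \<in> zspan (Phi_rels p E add smul)"
    using rel2I[of e E e' "Suc n" "r ^ p" add p smul]
    by (simp add: lm_rel3 zspan.zspan_gen)
next
  fix n r s e assume "e \<in> E" "x = (\<lambda>z. delta (n, r * s ^ (p ^ n), e) z - delta (n, r, smul s e) z)"
  moreover have "(r * s ^ (p ^ n)) ^ p = r ^ p * s ^ (p ^ Suc n)"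
    by (simp add: power_mult_distrib power_mult[symmetric] mult.commute)
  ultimately show "lin_map (\<lambda>(n, r, e). (Suc n, r ^ p, e)) x \<in> zspan (Phi_rels p E add smul)"
    using rel3I[of e E "Suc n" "r ^ p" s p smul add]
    by (simp add: lm_rel2 zspan.zspan_gen)
qed

lemma zspan_fin: "x \<in> zspan (Phi_rels p E add smul) \<Longrightarrow> finite (supp x)"
  using zero_free free_fin unfolding Phi_zero_def by blast

lemma smul_zero: "f \<in> Phi_zero p E add smul \<Longrightarrow> Phi_smul t f \<in> Phi_zero p E add smul"
  using zspan_map[of "Phi_rels p E add smul" "\<lambda>(n, r, e). (n, t * r, e)" "Phi_rels p E add smul" f]
    smul_rels zspan_fin unfolding Phi_zero_def Phi_smul_def by blast

lemma xact_zero: "prime p \<Longrightarrow> of_nat p = (0::'a) \<Longrightarrow> f \<in> Phi_zero p E add smul \<Longrightarrow> Phi_xact p f \<in> Phi_zero p E add smul"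
  using zspan_map[of "Phi_rels p E add smul" "\<lambda>(n, r, e). (Suc n, r ^ p, e)" "Phi_rels p E add smul" f]
    xact_rels zspan_fin unfolding Phi_zero_def Phi_xact_def by blast

end

context rmod begin

definition Gm :: "'b monoid" where "Gm = \<lparr>carrier = E, mult = add, one = zero\<rparr>"

lemma Gm_simps [simp]: "carrier Gm = E" "mult Gm = add" "one Gm = zero"
  by (simp_all add: Gm_def)

lemma Gm_comm: "comm_group Gm"
proof (rule comm_groupI)
  show "\<And>x y. x \<in> carrier Gm \<Longrightarrow> y \<in> carrier Gm \<Longrightarrow> x \<otimes>\<^bsub>Gm\<^esub> y \<in> carrier Gm"
    using closed by simp
  show "\<one>\<^bsub>Gm\<^esub> \<in> carrier Gm" by (simp add: closed(1))
  show "\<And>x y z. x \<in> carrier Gm \<Longrightarrow> y \<in> carrier Gm \<Longrightarrow> z \<in> carrier Gm \<Longrightarrow>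
      x \<otimes>\<^bsub>Gm\<^esub> y \<otimes>\<^bsub>Gm\<^esub> z = x \<otimes>\<^bsub>Gm\<^esub> (y \<otimes>\<^bsub>Gm\<^esub> z)"
    using assoc by simp
  show "\<And>x y. x \<in> carrier Gm \<Longrightarrow> y \<in> carrier Gm \<Longrightarrow> x \<otimes>\<^bsub>Gm\<^esub> y = y \<otimes>\<^bsub>Gm\<^esub> x"
    using comm by simp
  show "\<And>x. x \<in> carrier Gm \<Longrightarrow> \<one>\<^bsub>Gm\<^esub> \<otimes>\<^bsub>Gm\<^esub> x = x" using lzero by simp
  show "\<And>x. x \<in> carrier Gm \<Longrightarrow> \<exists>y\<in>carrier Gm. y \<otimes>\<^bsub>Gm\<^esub> x = \<one>\<^bsub>Gm\<^esub>"
    using inv_ex comm by simp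
qed

definition T :: "(nat \<times> 'a \<times> 'b \<Rightarrow> int) \<Rightarrow> nat \<times> 'a \<times> 'b \<Rightarrow> 'b" where
  "T f z = (if snd (snd z) \<in> E then smul (of_int (f z) * fst (snd z)) (snd (snd z)) else zero)"

definition ev :: "(nat \<times> 'a \<times> 'b \<Rightarrow> int) \<Rightarrow> 'b" where
  "ev f = finprod Gm (T f) {z. f z \<noteq> 0 \<and> fst z = 0}"

lemma T_closed: "T f z \<in> E"
  unfolding T_def using closed(1) closed(3) by simp

lemma ev_closed: "ev f \<in> E"
proof -
  interpret comm_group Gm by (rule Gm_comm)
  show ?thesis unfolding ev_def using finprod_closed[of "T f"] T_closed by simp
qed

lemma ev_cong:
  assumes "f \<in> free_Phi E" "finite A" "{z. f z \<noteq> 0 \<and> fst z = 0} \<subseteq> A"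
    "\<And>z. z \<in> A \<Longrightarrow> snd (snd z) \<in> E \<and> fst z = 0"
  shows "ev f = finprod Gm (T f) A"
proof -
  interpret comm_group Gm by (rule Gm_comm)
  show ?thesis unfolding ev_def
  proof (rule finprod_mono_neutral_cong_right[symmetric])
    show "finite A" by fact
    show "{z. f z \<noteq> 0 \<and> fst z = 0} \<subseteq> A" by fact
    show "\<And>i. i \<in> A - {z. f z \<noteq> 0 \<and> fst z = 0} \<Longrightarrow> T f i = \<one>\<^bsub>Gm\<^esub>"
    proof -
      fix i assume i: "i \<in> A - {z. f z \<noteq> 0 \<and> fst z = 0}"
      have fi: "fst i = 0" "snd (snd i) \<in> E" using assms(4) i by blast+
      hence "f i = 0" "snd (snd i) \<in> E" using i by blast+
      thus "T f i = \<one>\<^bsub>Gm\<^esub>" using szero by (simp add: T_def)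
    qed
    show "\<And>x. x \<in> {z. f z \<noteq> 0 \<and> fst z = 0} \<Longrightarrow> T f x = T f x" by simp
    show "T f \<in> A \<rightarrow> carrier Gm" using T_closed by simp
  qed
qed

lemma ev_add:
  assumes f: "f \<in> free_Phi E" and h: "h \<in> free_Phi E"
  shows "ev (\<lambda>z. f z + h z) = add (ev f) (ev h)"
proof -
  interpret comm_group Gm by (rule Gm_comm)
  let ?A = "{z. f z \<noteq> 0 \<and> fst z = 0} \<union> {z. h z \<noteq> 0 \<and> fst z = 0}"
  have fA: "finite ?A"
    using free_fin[OF f] free_fin[OF h] by (auto simp: supp_def intro: finite_subset)
  have inA: "\<And>z. z \<in> ?A \<Longrightarrow> snd (snd z) \<in> E \<and> fst z = 0"
    using freeE[OF f] freeE[OF h] by blast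
  have "ev (\<lambda>z. f z + h z) = finprod Gm (T (\<lambda>z. f z + h z)) ?A"
  proof (rule ev_cong[OF free_add[OF f h] fA _ inA])
    show "{z. f z + h z \<noteq> 0 \<and> fst z = 0} \<subseteq> ?A" by auto
  qed
  also have "\<dots> = finprod Gm (\<lambda>z. T f z \<otimes>\<^bsub>Gm\<^esub> T h z) ?A"
  proof (rule finprod_cong')
    show "(\<lambda>z. T f z \<otimes>\<^bsub>Gm\<^esub> T h z) \<in> ?A \<rightarrow> carrier Gm" using T_closed closed by simp
    fix z assume "z \<in> ?A"
    hence e: "snd (snd z) \<in> E" using inA by blast
    show "T (\<lambda>z. f z + h z) z = T f z \<otimes>\<^bsub>Gm\<^esub> T h z"
      unfolding T_def using rdistr[OF e] e by (simp add: distrib_right)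
  qed simp
  also have "\<dots> = finprod Gm (T f) ?A \<otimes>\<^bsub>Gm\<^esub> finprod Gm (T h) ?A"
  proof (rule finprod_multf)
    show "T f \<in> ?A \<rightarrow> carrier Gm" using T_closed by simp
    show "T h \<in> ?A \<rightarrow> carrier Gm" using T_closed by simp
  qed
  also have "\<dots> = add (ev f) (ev h)"
    using ev_cong[OF f fA Un_upper1 inA] ev_cong[OF h fA Un_upper2 inA] by simp
  finally show ?thesis .
qed

lemma ev_zero: "ev (\<lambda>z. 0) = zero"
proof -
  interpret comm_group Gm by (rule Gm_comm)
  show ?thesis unfolding ev_def by simp
qed

lemma ev_neg: assumes f: "f \<in> free_Phi E" shows "add (ev f) (ev (\<lambda>z. - f z)) = zero"
proof -
  have "add (ev f) (ev (\<lambda>z. - f z)) = ev (\<lambda>z. f z + (\<lambda>z. - f z) z)"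
    using ev_add[OF f free_neg[OF f]] by simp
  also have "\<dots> = zero" using ev_zero by simp
  finally show ?thesis .
qed

lemma ev_delta:
  assumes e: "e \<in> E"
  shows "ev (delta (n, r, e)) = (if n = 0 then smul r e else zero)"
proof -
  interpret comm_group Gm by (rule Gm_comm)
  have s: "{z. delta (n, r, e) z \<noteq> 0 \<and> fst z = 0} = (if n = 0 then {(n, r, e)} else {})"
    by (auto simp: delta_def)
  show ?thesis
  proof (cases "n = 0")
    case True
    hence "ev (delta (n, r, e)) = finprod Gm (T (delta (n, r, e))) {(n, r, e)}"
      unfolding ev_def using s by simp
    also have "\<dots> = T (delta (n, r, e)) (n, r, e)"
      using finprod_insert[of "{}" "(n, r, e)" "T (delta (n, r, e))"] T_closed rzero e by simp
    also have "\<dots> = smul r e" using e by (simp add: T_def delta_def)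
    finally show ?thesis using True by simp
  next
    case False
    thus ?thesis unfolding ev_def s by simp
  qed
qed


lemma ev3:
  assumes a: "snd (snd a) \<in> E" and b: "snd (snd b) \<in> E" and c: "snd (snd c) \<in> E"
    and eq: "ev (delta a) = add (ev (delta b)) (ev (delta c))"
  shows "ev (\<lambda>z. delta a z - delta b z - delta c z) = zero"
proof -
  let ?F = "\<lambda>z. delta a z - delta b z - delta c z"
  let ?F2 = "\<lambda>z. delta a z - delta b z"
  have fa: "delta a \<in> free_Phi E" using free_delta a by blast
  have fb: "delta b \<in> free_Phi E" using free_delta b by blast
  have fc: "delta c \<in> free_Phi E" using free_delta c by blast
  have fF2: "?F2 \<in> free_Phi E" using free_diff[OF fa fb] .
  have fF: "?F \<in> free_Phi E" using free_diff[OF fF2 fc] .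
  have e1: "(\<lambda>z. ?F2 z + delta b z) = delta a" by auto
  have e2: "(\<lambda>z. ?F z + delta c z) = ?F2" by auto
  let ?X = "ev ?F" let ?B = "ev (delta b)" let ?C = "ev (delta c)"
  have X: "?X \<in> E" "?B \<in> E" "?C \<in> E" using ev_closed by auto
  have "add (add ?X ?C) ?B = add ?B ?C"
    using ev_add[OF fF2 fb] ev_add[OF fF fc] e1 e2 eq by simp
  moreover have "add (add ?X ?C) ?B = add (add ?C ?B) ?X"
  proof -
    have "add (add ?X ?C) ?B = add ?X (add ?C ?B)" using assoc X by blast
    also have "\<dots> = add (add ?C ?B) ?X" using comm X closed(2)[OF X(3) X(2)] by blast
    finally show ?thesis .
  qed
  moreover have "add ?B ?C = add (add ?C ?B) zero"
    using comm[OF X(2) X(3)] rzero[OF closed(2)[OF X(3) X(2)]] by simp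
  ultimately have "add (add ?C ?B) ?X = add (add ?C ?B) zero" by simp
  thus ?thesis using cancel[OF closed(2)[OF X(3) X(2)] X(1) closed(1)] by blast
qed

lemma ev2:
  assumes a: "snd (snd a) \<in> E" and b: "snd (snd b) \<in> E"
    and eq: "ev (delta a) = ev (delta b)"
  shows "ev (\<lambda>z. delta a z - delta b z) = zero"
proof -
  let ?F2 = "\<lambda>z. delta a z - delta b z"
  have fa: "delta a \<in> free_Phi E" using free_delta a by blast
  have fb: "delta b \<in> free_Phi E" using free_delta b by blast
  have fF2: "?F2 \<in> free_Phi E" using free_diff[OF fa fb] .
  have e1: "(\<lambda>z. ?F2 z + delta b z) = delta a" by auto
  have X: "ev ?F2 \<in> E" "ev (delta b) \<in> E" using ev_closed by auto
  have "add (ev ?F2) (ev (delta b)) = ev (delta b)"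
    using ev_add[OF fF2 fb] e1 eq by simp
  hence "add (ev (delta b)) (ev ?F2) = add (ev (delta b)) zero"
    using comm[OF X(1) X(2)] rzero[OF X(2)] by simp
  thus ?thesis using cancel[OF X(2) X(1) closed(1)] by blast
qed

lemma ev_rels: "x \<in> Phi_rels p E add smul \<Longrightarrow> ev x = zero"
proof (erule relsE)
  fix n r r' e assume e: "e \<in> E" and x: "x = (\<lambda>z. delta (n, r + r', e) z - delta (n, r, e) z - delta (n, r', e) z)"
  have eq: "ev (delta (n, r + r', e)) = add (ev (delta (n, r, e))) (ev (delta (n, r', e)))"
    using ev_delta[OF e] rdistr[OF e] lzero closed by simp
  show "ev x = zero" unfolding x by (rule ev3[OF _ _ _ eq]) (simp_all add: e)
next
  fix n r e e' assume e: "e \<in> E" "e' \<in> E" and x: "x = (\<lambda>z. delta (n, r, add e e') z - delta (n, r, e) z - delta (n, r, e') z)"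
  have ee: "add e e' \<in> E" using closed e by blast
  have eq: "ev (delta (n, r, add e e')) = add (ev (delta (n, r, e))) (ev (delta (n, r, e')))"
    using ev_delta[OF e(1)] ev_delta[OF e(2)] ev_delta[OF ee] sdistr[OF e] lzero closed by simp
  show "ev x = zero" unfolding x by (rule ev3[OF _ _ _ eq]) (simp_all add: e ee)
next
  fix n r s e assume e: "e \<in> E" and x: "x = (\<lambda>z. delta (n, r * s ^ (p ^ n), e) z - delta (n, r, smul s e) z)"
  have se: "smul s e \<in> E" using closed e by blast
  have eq: "ev (delta (n, r * s ^ (p ^ n), e)) = ev (delta (n, r, smul s e))"
    using ev_delta[OF e] ev_delta[OF se] smult[OF e] by simp
  show "ev x = zero" unfolding x by (rule ev2[OF _ _ eq]) (simp_all add: e se)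
qed

lemma ev_Z: "f \<in> Phi_zero p E add smul \<Longrightarrow> ev f = zero"
proof -
  assume "f \<in> Phi_zero p E add smul"
  hence "f \<in> zspan (Phi_rels p E add smul)" by (simp add: Phi_zero_def)
  thus ?thesis
  proof (induction rule: zspan.induct)
    case zspan_zero then show ?case by (rule ev_zero)
  next
    case (zspan_gen g) then show ?case by (rule ev_rels)
  next
    case (zspan_add f h)
    have "f \<in> free_Phi E" "h \<in> free_Phi E"
      using zspan_add.hyps zero_free unfolding Phi_zero_def by blast+
    thus ?case using ev_add zspan_add.IH lzero closed by simp
  next
    case (zspan_neg f)
    have "f \<in> free_Phi E" using zspan_neg.hyps zero_free unfolding Phi_zero_def by blast
    hence "add (ev f) (ev (\<lambda>z. - f z)) = zero" by (rule ev_neg)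
    hence "add zero (ev (\<lambda>z. - f z)) = zero" using zspan_neg.IH by simp
    thus ?case using lzero ev_closed by simp
  qed
qed

lemma key: "e \<in> E \<Longrightarrow> delta (0, s, e) \<in> Phi_zero p E add smul \<Longrightarrow> smul s e = zero"
proof -
  assume e: "e \<in> E" and d: "delta (0, s, e) \<in> Phi_zero p E add smul"
  have "ev (delta (0, s, e)) = zero" by (rule ev_Z[OF d])
  thus ?thesis using ev_delta[OF e, of 0 s] by simp
qed

end

context rmod begin

lemma g_snd: "snd (snd ((\<lambda>(n, r, e). (Suc n, r ^ p, e)) z)) = snd (snd z)"
  "snd (snd ((\<lambda>(n, r, e). (n, t * r, e)) z)) = snd (snd z)"
  by (cases z; auto)+

lemma xact_free: "f \<in> free_Phi E \<Longrightarrow> Phi_xact p f \<in> free_Phi E"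
  unfolding Phi_xact_def by (rule free_lm) (rule g_snd)

lemma smul_free: "f \<in> free_Phi E \<Longrightarrow> Phi_smul t f \<in> free_Phi E"
  unfolding Phi_smul_def by (rule free_lm) (rule g_snd)

lemma xn_free: "f \<in> free_Phi E \<Longrightarrow> (Phi_xact p ^^ n) f \<in> free_Phi E"
  by (induction n) (auto intro: xact_free)

lemma xn_zero: "prime p \<Longrightarrow> of_nat p = (0::'a) \<Longrightarrow> f \<in> Phi_zero p E add smul \<Longrightarrow> (Phi_xact p ^^ n) f \<in> Phi_zero p E add smul"
  by (induction n) (auto intro: xact_zero)

lemma xn_add: "f \<in> free_Phi E \<Longrightarrow> h \<in> free_Phi E \<Longrightarrow>
   (Phi_xact p ^^ n) (\<lambda>z. f z + h z) = (\<lambda>z. (Phi_xact p ^^ n) f z + (Phi_xact p ^^ n) h z)"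
proof (induction n)
  case 0 then show ?case by simp
next
  case (Suc n)
  have "finite (supp ((Phi_xact p ^^ n) f))" "finite (supp ((Phi_xact p ^^ n) h))"
    using xn_free free_fin Suc.prems by blast+
  thus ?case using Suc by (simp add: Phi_xact_def lm_add)
qed

lemma xn_neg: "(Phi_xact p ^^ n) (\<lambda>z. - f z) = (\<lambda>z. - (Phi_xact p ^^ n) f z)"
  by (induction n) (simp_all add: Phi_xact_def lm_neg)

lemma xact_smul: "g \<in> free_Phi E \<Longrightarrow> Phi_xact p (Phi_smul (t::'a) g) = Phi_smul (t ^ p) (Phi_xact p g)"
proof -
  assume g: "g \<in> free_Phi E"
  have fg: "finite (supp g)" using free_fin g by blast
  have "(\<lambda>(n, r, e). (Suc n, r ^ p, e)) \<circ> (\<lambda>(n, r, e). (n, t * r, e)) =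
        ((\<lambda>(n, r, e). (n, t ^ p * r, e)) :: nat \<times> 'a \<times> 'b \<Rightarrow> nat \<times> 'a \<times> 'b) \<circ> (\<lambda>(n, r, e). (Suc n, r ^ p, e))"
    by (auto simp: fun_eq_iff power_mult_distrib)
  thus ?thesis unfolding Phi_xact_def Phi_smul_def lm_comp[OF fg] by (simp only:)
qed

lemma smul_smul: "g \<in> free_Phi E \<Longrightarrow> Phi_smul (r::'a) (Phi_smul t g) = Phi_smul (r * t) g"
proof -
  assume g: "g \<in> free_Phi E"
  have fg: "finite (supp g)" using free_fin g by blast
  have "(\<lambda>(n, x, e). (n, r * x, e)) \<circ> (\<lambda>(n, x, e). (n, t * x, e)) =
        ((\<lambda>(n, x, e). (n, r * t * x, e)) :: nat \<times> 'a \<times> 'b \<Rightarrow> nat \<times> 'a \<times> 'b)"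
    by (auto simp: fun_eq_iff mult.assoc)
  thus ?thesis unfolding Phi_smul_def lm_comp[OF fg] by (simp only:)
qed

lemma xn_smul: "f \<in> free_Phi E \<Longrightarrow> (Phi_xact p ^^ n) (Phi_smul (s::'a) f) = Phi_smul (s ^ (p ^ n)) ((Phi_xact p ^^ n) f)"
proof (induction n)
  case 0 then show ?case by simp
next
  case (Suc n)
  have "(Phi_xact p ^^ Suc n) (Phi_smul s f) = Phi_xact p (Phi_smul (s ^ (p ^ n)) ((Phi_xact p ^^ n) f))"
    using Suc by simp
  also have "\<dots> = Phi_smul ((s ^ (p ^ n)) ^ p) (Phi_xact p ((Phi_xact p ^^ n) f))"
    by (rule xact_smul) (rule xn_free[OF Suc.prems])
  also have "\<dots> = Phi_smul (s ^ (p ^ Suc n)) ((Phi_xact p ^^ Suc n) f)"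
    by (simp add: power_mult[symmetric] mult.commute)
  finally show ?case .
qed

lemma xn_delta: "(Phi_xact p ^^ n) (delta (0, 1, e)) = delta (n, 1, e)"
  by (induction n) (simp_all add: Phi_xact_def lm_delta)

end

theorem lemma1p1:
  fixes m :: "'a::comm_ring_1 set" and p :: nat
    and E :: "'b set" and add :: "'b \<Rightarrow> 'b \<Rightarrow> 'b" and zero :: 'b and smul :: "'a \<Rightarrow> 'b \<Rightarrow> 'b"
    and \<aa> :: "'a set"
  assumes "noetherian_ring TYPE('a)"
    and "local_ring_max m"
    and "prime (p::nat)" and "of_nat p = (0::'a)"
    and "F_pure TYPE('a) TYPE('a list set) p"
    and "is_rmodule E add zero smul"
    and "injective_hull_residue m E add zero smul"
    and "is_ideal \<aa>"
  shows "colon_mod E zero smul \<aa> \<subseteq> Phi_ann0 p E add smul \<aa> \<longleftrightarrow>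
         (Phi_special p E add smul \<aa> \<and> Phi_ann0 p E add smul \<aa> = colon_mod E zero smul \<aa>)"
proof -
  interpret rmod E add zero smul using assms(6) by unfold_locales
  note pr = assms(3) assms(4)
  let ?Z = "Phi_zero p E add smul"
  have amul: "\<And>r x. x \<in> \<aa> \<Longrightarrow> r * x \<in> \<aa>" using assms(8) unfolding is_ideal_def by blast
  have sub: "Phi_ann0 p E add smul \<aa> \<subseteq> colon_mod E zero smul \<aa>"
  proof
    fix e assume "e \<in> Phi_ann0 p E add smul \<aa>"
    hence e: "e \<in> E" "\<And>n r. r \<in> \<aa> \<Longrightarrow> delta (n, r, e) \<in> ?Z" unfolding Phi_ann0_def by auto
    show "e \<in> colon_mod E zero smul \<aa>" unfolding colon_mod_def using e key by blast
  qed
  show ?thesis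
  proof
    assume H: "colon_mod E zero smul \<aa> \<subseteq> Phi_ann0 p E add smul \<aa>"
    define N where "N = {f \<in> free_Phi E. \<forall>r\<in>\<aa>. \<forall>n. Phi_smul r ((Phi_xact p ^^ n) f) \<in> ?Z}"
    have rep: "Phi_submodule_rep p E add smul N"
      unfolding Phi_submodule_rep_def
    proof (intro conjI ballI allI)
      show "N \<subseteq> free_Phi E" unfolding N_def by blast
      show "?Z \<subseteq> N"
      proof
        fix f assume f: "f \<in> ?Z"
        show "f \<in> N" unfolding N_def
        proof (intro CollectI conjI ballI allI)
          show "f \<in> free_Phi E" by (rule zero_free[OF f])
          fix r n
          show "Phi_smul r ((Phi_xact p ^^ n) f) \<in> ?Z" by (rule smul_zero[OF xn_zero[OF pr f]])
        qed
      qed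
    next
      fix f h assume f: "f \<in> N" and h: "h \<in> N"
      have ff: "f \<in> free_Phi E" and hf: "h \<in> free_Phi E" using f h unfolding N_def by auto
      show "(\<lambda>z. f z + h z) \<in> N" unfolding N_def
      proof (intro CollectI conjI ballI allI)
        show "(\<lambda>z. f z + h z) \<in> free_Phi E" using free_add ff hf by blast
        fix r n assume r: "r \<in> \<aa>"
        have fin: "finite (supp ((Phi_xact p ^^ n) f))" "finite (supp ((Phi_xact p ^^ n) h))"
          using xn_free free_fin ff hf by blast+
        have "Phi_smul r ((Phi_xact p ^^ n) (\<lambda>z. f z + h z)) =
              (\<lambda>z. Phi_smul r ((Phi_xact p ^^ n) f) z + Phi_smul r ((Phi_xact p ^^ n) h) z)"
          unfolding xn_add[OF ff hf] Phi_smul_def by (rule lm_add[OF fin])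
        moreover have "Phi_smul r ((Phi_xact p ^^ n) f) \<in> ?Z" "Phi_smul r ((Phi_xact p ^^ n) h) \<in> ?Z"
          using f h r unfolding N_def by auto
        ultimately show "Phi_smul r ((Phi_xact p ^^ n) (\<lambda>z. f z + h z)) \<in> ?Z"
          unfolding Phi_zero_def by (simp add: zspan.zspan_add)
      qed
    next
      fix f assume f: "f \<in> N"
      have ff: "f \<in> free_Phi E" using f unfolding N_def by auto
      show "(\<lambda>z. - f z) \<in> N" unfolding N_def
      proof (intro CollectI conjI ballI allI)
        show "(\<lambda>z. - f z) \<in> free_Phi E" using free_neg ff by blast
        fix r n assume r: "r \<in> \<aa>"
        have "Phi_smul r ((Phi_xact p ^^ n) (\<lambda>z. - f z)) = (\<lambda>z. - Phi_smul r ((Phi_xact p ^^ n) f) z)"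
          unfolding xn_neg Phi_smul_def lm_neg by simp
        moreover have "Phi_smul r ((Phi_xact p ^^ n) f) \<in> ?Z" using f r unfolding N_def by auto
        ultimately show "Phi_smul r ((Phi_xact p ^^ n) (\<lambda>z. - f z)) \<in> ?Z"
          unfolding Phi_zero_def by (simp add: zspan.zspan_neg)
      qed
    next
      fix s f assume f: "f \<in> N"
      have ff: "f \<in> free_Phi E" using f unfolding N_def by auto
      show "Phi_smul s f \<in> N" unfolding N_def
      proof (intro CollectI conjI ballI allI)
        show "Phi_smul s f \<in> free_Phi E" using smul_free ff by blast
        fix r n assume r: "r \<in> \<aa>"
        have "Phi_smul r ((Phi_xact p ^^ n) (Phi_smul s f)) = Phi_smul (r * s ^ (p ^ n)) ((Phi_xact p ^^ n) f)"
          using xn_smul[OF ff] smul_smul[OF xn_free[OF ff]] by simp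
        moreover have "r * s ^ (p ^ n) \<in> \<aa>" using amul[OF r, of "s ^ p ^ n"] by (simp add: mult.commute)
        ultimately show "Phi_smul r ((Phi_xact p ^^ n) (Phi_smul s f)) \<in> ?Z"
          using f unfolding N_def by auto
      qed
    next
      fix f assume f: "f \<in> N"
      have ff: "f \<in> free_Phi E" using f unfolding N_def by auto
      show "Phi_xact p f \<in> N" unfolding N_def
      proof (intro CollectI conjI ballI allI)
        show "Phi_xact p f \<in> free_Phi E" using xact_free ff by blast
        fix r n assume r: "r \<in> \<aa>"
        have "(Phi_xact p ^^ n) (Phi_xact p f) = (Phi_xact p ^^ Suc n) f"
          by (simp add: funpow_Suc_right del: funpow.simps)
        moreover have "Phi_smul r ((Phi_xact p ^^ Suc n) f) \<in> ?Z"
          using f r unfolding N_def by blast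
        ultimately show "Phi_smul r ((Phi_xact p ^^ n) (Phi_xact p f)) \<in> ?Z"
          by (simp only:)
      qed
    qed
    have ann: "\<aa> = {s. \<forall>f\<in>N. Phi_smul s f \<in> ?Z}"
    proof
      show "\<aa> \<subseteq> {s. \<forall>f\<in>N. Phi_smul s f \<in> ?Z}"
      proof (intro subsetI CollectI ballI)
        fix s f assume "s \<in> \<aa>" "f \<in> N"
        hence "Phi_smul s ((Phi_xact p ^^ 0) f) \<in> ?Z" unfolding N_def by blast
        thus "Phi_smul s f \<in> ?Z" by simp
      qed
      show "{s. \<forall>f\<in>N. Phi_smul s f \<in> ?Z} \<subseteq> \<aa>"
      proof (rule subsetI, rule ccontr)
        fix s assume s: "s \<in> {s. \<forall>f\<in>N. Phi_smul s f \<in> ?Z}" and ns: "s \<notin> \<aa>"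
        obtain e where e: "e \<in> E" "\<forall>r\<in>\<aa>. smul r e = zero" "smul s e \<noteq> zero"
          using baer_sep[OF assms(6) assms(2) assms(7) assms(8) ns] by blast
        have "e \<in> colon_mod E zero smul \<aa>" unfolding colon_mod_def using e by blast
        hence ea: "\<And>n r. r \<in> \<aa> \<Longrightarrow> delta (n, r, e) \<in> ?Z" using H unfolding Phi_ann0_def by blast
        have "delta (0, 1, e) \<in> N" unfolding N_def
        proof (intro CollectI conjI ballI allI)
          show "delta (0, 1, e) \<in> free_Phi E" by (rule free_delta) (simp add: e(1))
          fix r n assume "r \<in> \<aa>"
          thus "Phi_smul r ((Phi_xact p ^^ n) (delta (0, 1, e))) \<in> ?Z"
            using ea by (simp add: xn_delta Phi_smul_def lm_delta)
        qed
        moreover have "\<forall>f\<in>N. Phi_smul s f \<in> ?Z" using s by simp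
        ultimately have "Phi_smul s (delta (0, 1, e)) \<in> ?Z" by (rule bspec[rotated])
        hence "delta (0, s, e) \<in> ?Z" by (simp add: Phi_smul_def lm_delta)
        thus False using key[OF e(1)] e(3) by blast
      qed
    qed
    show "Phi_special p E add smul \<aa> \<and> Phi_ann0 p E add smul \<aa> = colon_mod E zero smul \<aa>"
    proof
      show "Phi_special p E add smul \<aa>" unfolding Phi_special_def by (intro exI[of _ N] conjI rep ann)
      show "Phi_ann0 p E add smul \<aa> = colon_mod E zero smul \<aa>" by (rule equalityI[OF sub H])
    qed
  next
    assume "Phi_special p E add smul \<aa> \<and> Phi_ann0 p E add smul \<aa> = colon_mod E zero smul \<aa>"
    thus "colon_mod E zero smul \<aa> \<subseteq> Phi_ann0 p E add smul \<aa>" by simp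
  qed
qed

end
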